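(* Let $\widetilde\nabla$ be the canonical snm-connection on $\mathbb R^3$ determined by $\mathsf C=\partial_z$, and let $M$ be the rotational surface $\psi(s,t)=(x(s)\cos t,x(s)\sin t,z(s))$, $s\in I$, $t\in\mathbb R$, with $I$ an open interval, $x>0$, $x'^2+z'^2=1$, whose generating curve $s\mapsto(x(s),z(s))$ is a segment of a straight line. If the sectional curvature $K$ of $M$ with respect to $\widetilde\nabla$ is constant, then either $x$ is constant (so $M$ is part of a circular cylinder about the $z$-axis) and $K=\tfrac12$, or $z$ is constant (so $M$ is part of a horizontal plane) and $K=0$.
   Context: Let $\langle\cdot,\cdot\rangle$ be the Euclidean metric on $\mathbb R^3$ and $\widetilde\nabla^0$ its Levi-Civita connection (the ordinary directional derivative). Given a smooth vector field $\mathsf C$ on $\mathbb R^3$, the semi-symmetric non-metric connection (snm-connection) determined by $\mathsf C$ is $\widetilde\nabla_XY=\widetilde\nabla^0_XY+\langle \mathsf C,Y\rangle X$. Its curvature tensor is $\widetilde R(X,Y)Z=\widetilde\nabla_X\widetilde\nabla_YZ-\widetilde\nabla_Y\widetilde\nabla_XZ-\widetilde\nabla_{[X,Y]}Z$. For a surface $M$ immersed in $\mathbb R^3$, the induced connection is $\nabla_XY=(\widetilde\nabla_XY)^{\top}$ (tangential component), with curvature tensor $R$ defined by the same formula, and the sectional curvature of $M$ with respect to $\widetilde\nabla$ at $p$ is $K(p)=\frac12\big(\langle R(e_1,e_2)e_2,e_1\rangle+\langle R(e_2,e_1)e_1,e_2\rangle\big)$ for an orthonormal basis $\{e_1,e_2\}$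 of $T_pM$. *)

theory Defs
  imports "HOL-Analysis.Analysis"
begin

type_synonym param = "real \<times> real"
type_synonym vec3 = "real^3"

definition smooth_real_on :: "real set \<Rightarrow> (real \<Rightarrow> real) \<Rightarrow> bool" where
  "smooth_real_on I f \<longleftrightarrow> (\<exists>D :: nat \<Rightarrow> real \<Rightarrow> real. D 0 = f \<and>
      (\<forall>n. \<forall>s\<in>I. (D n has_real_derivative D (Suc n) s) (at s)))"

text \<open>For a field W along
  psi this is the Euclidean (Levi-Civita) derivative of W in direction d psi(a).\<close>
definition pdir :: "(param \<Rightarrow> 'a::real_normed_vector) \<Rightarrow> param \<Rightarrow> param \<Rightarrow> 'a" where
  "pdir W u a = vector_derivative (\<lambda>h. W (u + h *\<^sub>R a)) (at 0)"

definition tangent_space :: "(param \<Rightarrow> vec3) \<Rightarrow> param \<Rightarrow> vec3 set" where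
  "tangent_space \<psi> u = span {pdir \<psi> u (1,0), pdir \<psi> u (0,1)}"

definition tang :: "(param \<Rightarrow> vec3) \<Rightarrow> param \<Rightarrow> vec3 \<Rightarrow> vec3" where
  "tang \<psi> u V = (THE w. w \<in> tangent_space \<psi> u \<and>
                        (\<forall>v\<in>tangent_space \<psi> u. (V - w) \<bullet> v = 0))"

text \<open>The snm-connection determined by C applied to a field Y along psi, in
  direction X = d psi(a):  nabla~_X Y = nabla~0_X Y + <C,Y> X.\<close>
definition snm_conn :: "(vec3 \<Rightarrow> vec3) \<Rightarrow> (param \<Rightarrow> vec3) \<Rightarrow> param \<Rightarrow> (param \<Rightarrow> vec3) \<Rightarrow> param \<Rightarrow> vec3" where
  "snm_conn C \<psi> a Y u = pdir Y u a + (C (\<psi> u) \<bullet> Y u) *\<^sub>R pdir \<psi> u a"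

definition ind_conn :: "(vec3 \<Rightarrow> vec3) \<Rightarrow> (param \<Rightarrow> vec3) \<Rightarrow> param \<Rightarrow> (param \<Rightarrow> vec3) \<Rightarrow> param \<Rightarrow> vec3" where
  "ind_conn C \<psi> a Y u = tang \<psi> u (snm_conn C \<psi> a Y u)"

text \<open>Curvature R(X,Y)Z of the induced connection at psi(u), for X = d psi(a),
  Y = d psi(b), Z = d psi(c), computed with the coordinate-constant extensions
  of X, Y, Z (whose Lie bracket [X,Y] vanishes, so the term nabla_[X,Y] Z is 0).\<close>
definition ind_curv :: "(vec3 \<Rightarrow> vec3) \<Rightarrow> (param \<Rightarrow> vec3) \<Rightarrow> param \<Rightarrow> param \<Rightarrow> param \<Rightarrow> param \<Rightarrow> vec3" where
  "ind_curv C \<psi> a b c u =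
     (let Z = (\<lambda>v. pdir \<psi> v c) in
      ind_conn C \<psi> a (ind_conn C \<psi> b Z) u - ind_conn C \<psi> b (ind_conn C \<psi> a Z) u)"

definition sect_expr :: "(vec3 \<Rightarrow> vec3) \<Rightarrow> (param \<Rightarrow> vec3) \<Rightarrow> param \<Rightarrow> param \<Rightarrow> param \<Rightarrow> real" where
  "sect_expr C \<psi> u a b =
     (1/2) * (ind_curv C \<psi> a b b u \<bullet> pdir \<psi> u a + ind_curv C \<psi> b a a u \<bullet> pdir \<psi> u b)"

definition const_sect_curv :: "(vec3 \<Rightarrow> vec3) \<Rightarrow> (param \<Rightarrow> vec3) \<Rightarrow> param set \<Rightarrow> real \<Rightarrow> bool" where
  "const_sect_curv C \<psi> U k \<longleftrightarrow>
     (\<forall>u\<in>U. \<forall>a b. norm (pdir \<psi> u a) = 1 \<and> norm (pdir \<psi> u b) = 1 \<and>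
                   pdir \<psi> u a \<bullet> pdir \<psi> u b = 0 \<longrightarrow> sect_expr C \<psi> u a b = k)"

definition rot_surf :: "(real \<Rightarrow> real) \<Rightarrow> (real \<Rightarrow> real) \<Rightarrow> param \<Rightarrow> vec3" where
  "rot_surf x z = (\<lambda>(s,t). vector [x s * cos t, x s * sin t, z s])"

definition Cz :: "vec3 \<Rightarrow> vec3" where
  "Cz = (\<lambda>_. vector [0, 0, 1])"

end

theory Submission
  imports Defs
begin


lemma vec3_eq: "(vector [a1,a2,a3] :: vec3) = vector [b1,b2,b3] \<longleftrightarrow> a1=b1 \<and> a2=b2 \<and> a3=b3"
  by (simp add: vec_eq_iff forall_3)
lemma vec3_add[simp]: "(vector [a1,a2,a3] :: vec3) + vector [b1,b2,b3] = vector [a1+b1,a2+b2,a3+b3]"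
  by (simp add: vec_eq_iff forall_3)
lemma vec3_diff[simp]: "(vector [a1,a2,a3] :: vec3) - vector [b1,b2,b3] = vector [a1-b1,a2-b2,a3-b3]"
  by (simp add: vec_eq_iff forall_3)
lemma vec3_scale[simp]: "c *\<^sub>R (vector [a1,a2,a3] :: vec3) = vector [c*a1,c*a2,c*a3]"
  by (simp add: vec_eq_iff forall_3)
lemma vec3_inner[simp]: "(vector [a1,a2,a3] :: vec3) \<bullet> vector [b1,b2,b3] = a1*b1+a2*b2+a3*b3"
  by (simp add: inner_vec_def sum_3)
lemma vec3_norm: "norm (vector [a1,a2,a3] :: vec3) = sqrt (a1*a1+a2*a2+a3*a3)"
  by (simp add: norm_eq_sqrt_inner)

lemma vec3_split: "(vector [a,b,c] :: vec3) = a *\<^sub>R vector [1,0,0] + b *\<^sub>R vector [0,1,0] + c *\<^sub>R vector[0,0,1]"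
  by simp

lemma hvd_sc: "(f has_real_derivative d) (at y within S) \<Longrightarrow> ((\<lambda>x. f x *\<^sub>R v) has_vector_derivative d *\<^sub>R v) (at y within S)"
  using has_vector_derivative_scaleR[OF _ has_vector_derivative_const, of f d y S v] by simp

lemma vec3_deriv:
  assumes "(f1 has_real_derivative d1) (at y0 within S)" "(f2 has_real_derivative d2) (at y0 within S)" "(f3 has_real_derivative d3) (at y0 within S)"
  shows "((\<lambda>y. vector [f1 y, f2 y, f3 y] :: vec3) has_vector_derivative vector [d1,d2,d3]) (at y0 within S)"
proof -
  have "((\<lambda>y. f1 y *\<^sub>R (vector [1,0,0]::vec3) + f2 y *\<^sub>R vector [0,1,0] + f3 y *\<^sub>R vector[0,0,1])
     has_vector_derivative (d1 *\<^sub>R (vector [1,0,0]::vec3) + d2 *\<^sub>R vector [0,1,0] + d3 *\<^sub>R vector[0,0,1])) (at y0 within S)"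
    by (intro has_vector_derivative_add hvd_sc assms)
  then show ?thesis by (simp del: vec3_scale add: vec3_split[symmetric])
qed

lemma pdir_s:
  assumes "open I" "s \<in> I" "\<And>r. r \<in> I \<Longrightarrow> W (r,t) = W' (r,t)"
    and "((\<lambda>r. W' (r,t)) has_vector_derivative V) (at s)"
  shows "pdir W (s,t) (1,0) = V"
proof -
  have "((\<lambda>r. W' (r,t)) \<circ> (\<lambda>h. s + h) has_vector_derivative 1 *\<^sub>R V) (at 0)"
    by (rule vector_diff_chain_at) (auto intro!: derivative_eq_intros assms(4))
  then have d: "((\<lambda>h. W' (s+h,t)) has_vector_derivative V) (at 0)" by (simp add: o_def)
  have "((\<lambda>h. W ((s,t) + h *\<^sub>R (1,0))) has_vector_derivative V) (at 0)"
  proof (rule has_vector_derivative_transform_within_open[OF d])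
    show "open ((\<lambda>h. s + h) -` I)"
      by (rule open_vimage[OF assms(1)]) (intro continuous_intros)
    show "0 \<in> (\<lambda>h. s + h) -` I" using assms(2) by simp
    fix y assume "y \<in> (\<lambda>h. s + h) -` I"
    then show "W' (s+y,t) = W ((s,t) + y *\<^sub>R (1,0))" using assms(3)[of "s+y"] by simp
  qed
  then show ?thesis unfolding pdir_def by (rule vector_derivative_at)
qed

lemma pdir_t:
  assumes "\<And>r. W (s,r) = W' (s,r)"
    and "((\<lambda>r. W' (s,r)) has_vector_derivative V) (at t)"
  shows "pdir W (s,t) (0,l) = l *\<^sub>R V"
proof -
  have "((\<lambda>r. W' (s,r)) \<circ> (\<lambda>h. t + h * l) has_vector_derivative l *\<^sub>R V) (at 0)"
    by (rule vector_diff_chain_at) (auto intro!: derivative_eq_intros assms(2))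
  then have "((\<lambda>h. W ((s,t) + h *\<^sub>R (0,l))) has_vector_derivative l *\<^sub>R V) (at 0)"
    by (simp add: o_def assms(1) mult.commute)
  then show ?thesis unfolding pdir_def by (rule vector_derivative_at)
qed

lemma tang_char:
  assumes "tangent_space \<psi> u = span {P1, P2}" "P1 \<bullet> P1 = 1" "P1 \<bullet> P2 = 0" "P2 \<bullet> P2 = L" "L \<noteq> 0"
  shows "tang \<psi> u V = (V \<bullet> P1) *\<^sub>R P1 + ((V \<bullet> P2) / L) *\<^sub>R P2"
proof -
  let ?w = "(V \<bullet> P1) *\<^sub>R P1 + ((V \<bullet> P2) / L) *\<^sub>R P2"
  let ?S = "span {P1, P2}"
  have ws: "?w \<in> ?S" by (intro span_add span_mul span_base) auto
  have c: "P2 \<bullet> P1 = 0" using assms(3) by (simp add: inner_commute)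
  have "(V - ?w) \<bullet> P1 = V \<bullet> P1 - (V \<bullet> P1) * (P1 \<bullet> P1) - ((V \<bullet> P2) / L) * (P2 \<bullet> P1)"
    by (simp add: inner_diff_left inner_add_left)
  then have o1: "(V - ?w) \<bullet> P1 = 0" using assms c by simp
  have "(V - ?w) \<bullet> P2 = V \<bullet> P2 - (V \<bullet> P1) * (P1 \<bullet> P2) - ((V \<bullet> P2) / L) * (P2 \<bullet> P2)"
    by (simp add: inner_diff_left inner_add_left)
  then have o2: "(V - ?w) \<bullet> P2 = 0" using assms by simp
  have orth: "\<forall>v\<in>?S. (V - ?w) \<bullet> v = 0"
  proof
    fix v assume "v \<in> ?S"
    then have "orthogonal (V - ?w) v"
      by (rule orthogonal_to_span) (use o1 o2 in \<open>auto simp: orthogonal_def\<close>)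
    then show "(V - ?w) \<bullet> v = 0" by (simp add: orthogonal_def)
  qed
  show ?thesis unfolding tang_def assms(1)
  proof (rule the_equality)
    show "?w \<in> ?S \<and> (\<forall>v\<in>?S. (V - ?w) \<bullet> v = 0)" using ws orth by blast
    fix w' assume h: "w' \<in> ?S \<and> (\<forall>v\<in>?S. (V - w') \<bullet> v = 0)"
    have d: "w' - ?w \<in> ?S" using h ws by (intro span_diff) auto
    have "(V - ?w) \<bullet> (w' - ?w) - (V - w') \<bullet> (w' - ?w) = 0" using h orth d by auto
    then have "(w' - ?w) \<bullet> (w' - ?w) = 0" by (simp add: inner_diff_left algebra_simps)
    then show "w' = ?w" by simp
  qed
qed



lemma sq_aux: "a*a+b*b = 1 \<Longrightarrow> (d*b)*(d*b) + (d*a)*(d*a) = (d*d::real)"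
proof -
  assume h: "a*a+b*b = 1"
  have "(d*b)*(d*b) + (d*a)*(d*a) = d*d*(a*a+b*b)" by (simp add: algebra_simps)
  then show ?thesis using h by simp
qed

context
  fixes I :: "real set" and x z :: "real \<Rightarrow> real" and x0 z0 p q :: real
  assumes I: "open I" and xl: "\<forall>\<sigma>\<in>I. x \<sigma> = x0 + p*\<sigma>" and zl: "\<forall>\<sigma>\<in>I. z \<sigma> = z0 + q*\<sigma>"
    and pos: "\<forall>\<sigma>\<in>I. x \<sigma> > 0" and pq: "p\<^sup>2 + q\<^sup>2 = 1"
begin

definition "Ps = (\<lambda>(\<sigma>::real,\<tau>::real). vector [p * cos \<tau>, p * sin \<tau>, q] :: vec3)"
definition "Pt = (\<lambda>(\<sigma>::real,\<tau>::real). vector [- (x0 + p*\<sigma>) * sin \<tau>, (x0 + p*\<sigma>) * cos \<tau>, 0] :: vec3)"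

lemma psi_eq: "\<sigma> \<in> I \<Longrightarrow> rot_surf x z (\<sigma>,\<tau>) = vector [(x0 + p*\<sigma>) * cos \<tau>, (x0 + p*\<sigma>) * sin \<tau>, z0 + q*\<sigma>]"
  using xl zl by (simp add: rot_surf_def)

lemma D1: "\<sigma> \<in> I \<Longrightarrow> pdir (rot_surf x z) (\<sigma>,\<tau>) (1,0) = Ps (\<sigma>,\<tau>)"
  apply (rule pdir_s[OF I, where W'="\<lambda>(\<sigma>,\<tau>). vector [(x0 + p*\<sigma>) * cos \<tau>, (x0 + p*\<sigma>) * sin \<tau>, z0 + q*\<sigma>]"])
    apply (auto simp: psi_eq Ps_def)
  apply (rule vec3_deriv) apply (auto intro!: derivative_eq_intros)
  done

lemma D2: "\<sigma> \<in> I \<Longrightarrow> pdir (rot_surf x z) (\<sigma>,\<tau>) (0,l) = l *\<^sub>R Pt (\<sigma>,\<tau>)"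
  apply (rule pdir_t[where W'="\<lambda>(\<sigma>,\<tau>). vector [(x0 + p*\<sigma>) * cos \<tau>, (x0 + p*\<sigma>) * sin \<tau>, z0 + q*\<sigma>]"])
   apply (auto simp: psi_eq Pt_def simp del: vec3_scale)
  apply (rule vec3_deriv) apply (auto intro!: derivative_eq_intros simp: algebra_simps)
  done

lemma Xpos: "\<sigma> \<in> I \<Longrightarrow> x0 + p*\<sigma> > 0" using xl pos by force

lemma dots: 
  "Ps (\<sigma>,\<tau>) \<bullet> Ps (\<sigma>,\<tau>) = 1" "Ps (\<sigma>,\<tau>) \<bullet> Pt (\<sigma>,\<tau>) = 0" "Pt (\<sigma>,\<tau>) \<bullet> Pt (\<sigma>,\<tau>) = (x0 + p*\<sigma>)\<^sup>2"
proof -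
  have sc: "sin \<tau> * sin \<tau> + cos \<tau> * cos \<tau> = 1" using sin_cos_squared_add[of \<tau>] by (simp add: power2_eq_square)
  show "Ps (\<sigma>,\<tau>) \<bullet> Ps (\<sigma>,\<tau>) = 1" unfolding Ps_def using sq_aux[OF sc, of p] pq by (simp add: power2_eq_square)
  show "Ps (\<sigma>,\<tau>) \<bullet> Pt (\<sigma>,\<tau>) = 0" unfolding Ps_def Pt_def by (simp add: algebra_simps)
  show "Pt (\<sigma>,\<tau>) \<bullet> Pt (\<sigma>,\<tau>) = (x0 + p*\<sigma>)\<^sup>2" unfolding Pt_def using sc by simp algebra
qed

lemma tang_eq:
  assumes "\<sigma> \<in> I" "V \<bullet> Ps (\<sigma>,\<tau>) = c1" "V \<bullet> Pt (\<sigma>,\<tau>) = c2 * (x0 + p*\<sigma>)\<^sup>2"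
  shows "tang (rot_surf x z) (\<sigma>,\<tau>) V = c1 *\<^sub>R Ps (\<sigma>,\<tau>) + c2 *\<^sub>R Pt (\<sigma>,\<tau>)"
proof -
  have ts: "tangent_space (rot_surf x z) (\<sigma>,\<tau>) = span {Ps (\<sigma>,\<tau>), Pt (\<sigma>,\<tau>)}"
    unfolding tangent_space_def using D1[OF assms(1)] D2[OF assms(1), of \<tau> 1] by simp
  have "(x0 + p*\<sigma>)\<^sup>2 \<noteq> 0" using Xpos[OF assms(1)] by simp
  then have "tang (rot_surf x z) (\<sigma>,\<tau>) V = (V \<bullet> Ps (\<sigma>,\<tau>)) *\<^sub>R Ps (\<sigma>,\<tau>) + ((V \<bullet> Pt (\<sigma>,\<tau>)) / (x0 + p*\<sigma>)\<^sup>2) *\<^sub>R Pt (\<sigma>,\<tau>)"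
    by (rule tang_char[OF ts dots(1) dots(2) dots(3)])
  then show ?thesis using assms(2,3) \<open>(x0 + p*\<sigma>)\<^sup>2 \<noteq> 0\<close> by (simp del: vec3_scale)
qed


abbreviation "\<psi> \<equiv> rot_surf x z"

lemma Cz_Ps: "Cz v \<bullet> Ps (\<sigma>,\<tau>) = q" by (simp add: Cz_def Ps_def)
lemma Cz_Pt: "Cz v \<bullet> Pt (\<sigma>,\<tau>) = 0" by (simp add: Cz_def Pt_def)

lemma sc: "sin (\<tau>::real) * sin \<tau> + cos \<tau> * cos \<tau> = 1" using sin_cos_squared_add[of \<tau>] by (simp add: power2_eq_square)

lemma inner1_bb: assumes "\<sigma> \<in> I"
  shows "ind_conn Cz \<psi> (0,l) (\<lambda>v. pdir \<psi> v (0,l)) (\<sigma>,\<tau>) = (-(l*l*p*(x0+p*\<sigma>))) *\<^sub>R Ps(\<sigma>,\<tau>) + 0 *\<^sub>R Pt(\<sigma>,\<tau>)"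
proof -
  have pd: "pdir (\<lambda>v. pdir \<psi> v (0,l)) (\<sigma>,\<tau>) (0,l) = l *\<^sub>R vector [- (l*(x0+p*\<sigma>)* cos \<tau>), -(l*(x0+p*\<sigma>)* sin \<tau>), 0]"
    apply (rule pdir_t[where W' = "\<lambda>(\<sigma>,\<tau>). vector [- (l*(x0+p*\<sigma>)* sin \<tau>), l*(x0+p*\<sigma>)* cos \<tau>, 0]"])
     apply (simp add: D2[OF assms] Pt_def algebra_simps)
    by (auto intro!: vec3_deriv derivative_eq_intros simp: algebra_simps)
  show ?thesis unfolding ind_conn_def snm_conn_def
    apply (rule tang_eq[OF assms])
    using sc[of \<tau>] by (simp_all add: pd D2[OF assms] Cz_def Ps_def Pt_def) ((simp add: algebra_simps; fail) | algebra)+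
qed

lemma ind_conn_unf: "ind_conn C \<phi> a Y u = tang \<phi> u (pdir Y u a + (C (\<phi> u) \<bullet> Y u) *\<^sub>R pdir \<phi> u a)"
  by (simp add: ind_conn_def snm_conn_def)

lemma Xne: "\<sigma> \<in> I \<Longrightarrow> x0 + p*\<sigma> \<noteq> 0" using Xpos by force
lemma Xne': "\<sigma> \<in> I \<Longrightarrow> x0 + \<sigma>*p \<noteq> 0" using Xpos by (force simp: mult.commute)

lemma comb1: "a - b = (c::real) \<Longrightarrow> (a *\<^sub>R P + 0 *\<^sub>R Q) - (b *\<^sub>R P + 0 *\<^sub>R Q) = c *\<^sub>R (P::vec3)"
  by (metis add.right_neutral scaleR_left_diff_distrib scaleR_zero_left)
lemma comb2: "a - b = (c::real) \<Longrightarrow> (0 *\<^sub>R P + a *\<^sub>R Q) - (0 *\<^sub>R P + b *\<^sub>R Q) = c *\<^sub>R (Q::vec3)"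
  by (metis add_0 scaleR_left_diff_distrib scaleR_zero_left)

lemma inner2_ab: assumes "\<sigma> \<in> I"
  shows "ind_conn Cz \<psi> (1,0) (\<lambda>v. pdir \<psi> v (0,l)) (\<sigma>,\<tau>) = 0 *\<^sub>R Ps(\<sigma>,\<tau>) + (l*p/(x0+p*\<sigma>)) *\<^sub>R Pt(\<sigma>,\<tau>)"
proof -
  have pd: "pdir (\<lambda>v. pdir \<psi> v (0,l)) (\<sigma>,\<tau>) (1,0) = vector [- (l*p * sin \<tau>), l*p * cos \<tau>, 0]"
    apply (rule pdir_s[OF I assms, where W' = "\<lambda>(\<sigma>,\<tau>). vector [- (l*(x0+p*\<sigma>) * sin \<tau>), l*(x0+p*\<sigma>) * cos \<tau>, 0]"])
     apply (simp add: D2 Pt_def algebra_simps)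
    by (auto intro!: vec3_deriv derivative_eq_intros simp: algebra_simps)
  show ?thesis unfolding ind_conn_def snm_conn_def
    apply (rule tang_eq[OF assms])
    using sc[of \<tau>] Xne[OF assms] apply (simp_all only: pd D1[OF assms] D2[OF assms])
    apply (simp_all add: Cz_def Ps_def Pt_def power2_eq_square)
    apply ((simp add: algebra_simps; fail) | (insert sc[of \<tau>], algebra) | (simp add: field_simps, insert sc[of \<tau>], algebra) | (simp add: field_simps; fail))+
    done
qed

lemma inner1_aa: assumes "\<sigma> \<in> I"
  shows "ind_conn Cz \<psi> (1,0) (\<lambda>v. pdir \<psi> v (1,0)) (\<sigma>,\<tau>) = q *\<^sub>R Ps(\<sigma>,\<tau>) + 0 *\<^sub>R Pt(\<sigma>,\<tau>)"
proof -
  have pd: "pdir (\<lambda>v. pdir \<psi> v (1,0)) (\<sigma>,\<tau>) (1,0) = 0"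
    apply (rule pdir_s[OF I assms, where W' = "\<lambda>(\<sigma>,\<tau>). vector [p * cos \<tau>, p * sin \<tau>, q]"])
     apply (simp add: D1 Ps_def)
    by simp
  show ?thesis unfolding ind_conn_def snm_conn_def
    apply (rule tang_eq[OF assms])
    using sc[of \<tau>] pq apply (simp_all only: pd D1[OF assms])
    apply (simp_all add: Cz_def Ps_def Pt_def power2_eq_square)
    apply ((simp add: algebra_simps; fail) | (insert sc[of \<tau>], algebra) | (simp add: field_simps, insert sc[of \<tau>], algebra) | (simp add: field_simps; fail))+
    done
qed

lemma inner2_ba: assumes "\<sigma> \<in> I"
  shows "ind_conn Cz \<psi> (0,l) (\<lambda>v. pdir \<psi> v (1,0)) (\<sigma>,\<tau>) = 0 *\<^sub>R Ps(\<sigma>,\<tau>) + (l*(p/(x0+p*\<sigma>) + q)) *\<^sub>R Pt(\<sigma>,\<tau>)"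
proof -
  have pd: "pdir (\<lambda>v. pdir \<psi> v (1,0)) (\<sigma>,\<tau>) (0,l) = l *\<^sub>R vector [- (p * sin \<tau>), p * cos \<tau>, 0]"
    apply (rule pdir_t[where W' = "\<lambda>(\<sigma>,\<tau>). vector [p * cos \<tau>, p * sin \<tau>, q]"])
     apply (simp add: D1[OF assms] Ps_def)
    by (auto intro!: vec3_deriv derivative_eq_intros)
  show ?thesis unfolding ind_conn_def snm_conn_def
    apply (rule tang_eq[OF assms])
    using sc[of \<tau>] Xne[OF assms] apply (simp_all only: pd D1[OF assms] D2[OF assms])
    apply (simp_all add: Cz_def Ps_def Pt_def power2_eq_square)
    apply ((simp add: algebra_simps; fail) | (insert sc[of \<tau>], algebra) | (simp add: field_simps, insert sc[of \<tau>], algebra) | (simp add: field_simps; fail))+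
    done
qed

lemma term1_abb: assumes "\<sigma> \<in> I"
  shows "ind_conn Cz \<psi> (1,0) (ind_conn Cz \<psi> (0,l) (\<lambda>v. pdir \<psi> v (0,l))) (\<sigma>,\<tau>) = (-(l*l*(p*p + p*q*(x0+p*\<sigma>)))) *\<^sub>R Ps(\<sigma>,\<tau>) + 0 *\<^sub>R Pt(\<sigma>,\<tau>)"
proof -
  have pd: "pdir (ind_conn Cz \<psi> (0,l) (\<lambda>v. pdir \<psi> v (0,l))) (\<sigma>,\<tau>) (1,0) = vector [- (l*l*p*p*p * cos \<tau>), - (l*l*p*p*p * sin \<tau>), - (l*l*p*p*q)]"
    apply (rule pdir_s[OF I assms, where W' = "\<lambda>(\<sigma>,\<tau>). vector [- (l*l*p*(x0+p*\<sigma>)*p * cos \<tau>), - (l*l*p*(x0+p*\<sigma>)*p * sin \<tau>), - (l*l*p*(x0+p*\<sigma>)*q)]"])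
     apply (simp add: inner1_bb Ps_def Pt_def algebra_simps)
    by (auto intro!: vec3_deriv derivative_eq_intros simp: algebra_simps)
  show ?thesis unfolding ind_conn_unf[where a="(1,0)" and Y="ind_conn Cz \<psi> (0,l) (\<lambda>v. pdir \<psi> v (0,l))"]
    apply (rule tang_eq[OF assms])
    using sc[of \<tau>] pq apply (simp_all only: pd inner1_bb[OF assms] D1[OF assms])
    apply (simp_all add: Cz_def Ps_def Pt_def power2_eq_square)
    apply ((simp add: algebra_simps; fail) | (insert sc[of \<tau>], algebra) | (simp add: field_simps, insert sc[of \<tau>], algebra) | (simp add: field_simps; fail))+
    done
qed

lemma term2_abb: assumes "\<sigma> \<in> I"
  shows "ind_conn Cz \<psi> (0,l) (ind_conn Cz \<psi> (1,0) (\<lambda>v. pdir \<psi> v (0,l))) (\<sigma>,\<tau>) = (-(l*l*p*p)) *\<^sub>R Ps(\<sigma>,\<tau>) + 0 *\<^sub>R Pt(\<sigma>,\<tau>)"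
proof -
  have pd: "pdir (ind_conn Cz \<psi> (1,0) (\<lambda>v. pdir \<psi> v (0,l))) (\<sigma>,\<tau>) (0,l) = l *\<^sub>R vector [- (l*p * cos \<tau>), - (l*p * sin \<tau>), 0]"
    apply (rule pdir_t[where W' = "\<lambda>(\<sigma>,\<tau>). vector [- (l*p * sin \<tau>), l*p * cos \<tau>, 0]"])
     using Xne[OF assms] apply (simp add: inner2_ab[OF assms] Ps_def Pt_def vec3_eq field_simps)
    by (auto intro!: vec3_deriv derivative_eq_intros)
  show ?thesis unfolding ind_conn_unf[where a="(0,l)" and Y="ind_conn Cz \<psi> (1,0) (\<lambda>v. pdir \<psi> v (0,l))"]
    apply (rule tang_eq[OF assms])
    using sc[of \<tau>] Xne[OF assms] apply (simp_all only: pd inner2_ab[OF assms] D2[OF assms])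
    apply (simp_all add: Cz_def Ps_def Pt_def power2_eq_square)
    apply ((simp add: algebra_simps; fail) | (insert sc[of \<tau>], algebra) | (simp add: field_simps, insert sc[of \<tau>], algebra) | (simp add: field_simps; fail))+
    done
qed

lemma term1_baa: assumes "\<sigma> \<in> I"
  shows "ind_conn Cz \<psi> (0,l) (ind_conn Cz \<psi> (1,0) (\<lambda>v. pdir \<psi> v (1,0))) (\<sigma>,\<tau>) = 0 *\<^sub>R Ps(\<sigma>,\<tau>) + (l*(q*p/(x0+p*\<sigma>) + q*q)) *\<^sub>R Pt(\<sigma>,\<tau>)"
proof -
  have pd: "pdir (ind_conn Cz \<psi> (1,0) (\<lambda>v. pdir \<psi> v (1,0))) (\<sigma>,\<tau>) (0,l) = l *\<^sub>R vector [- (q*p * sin \<tau>), q*p * cos \<tau>, 0]"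
    apply (rule pdir_t[where W' = "\<lambda>(\<sigma>,\<tau>). vector [q*p * cos \<tau>, q*p * sin \<tau>, q*q]"])
     apply (simp add: inner1_aa[OF assms] Ps_def Pt_def algebra_simps)
    by (auto intro!: vec3_deriv derivative_eq_intros)
  show ?thesis unfolding ind_conn_unf[where a="(0,l)" and Y="ind_conn Cz \<psi> (1,0) (\<lambda>v. pdir \<psi> v (1,0))"]
    apply (rule tang_eq[OF assms])
    using sc[of \<tau>] Xne[OF assms] apply (simp_all only: pd inner1_aa[OF assms] D2[OF assms])
    apply (simp_all add: Cz_def Ps_def Pt_def power2_eq_square)
    apply ((simp add: algebra_simps; fail) | (insert sc[of \<tau>], algebra) | (simp add: field_simps, insert sc[of \<tau>], algebra) | (simp add: field_simps; fail))+
    done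
qed

lemma term2_baa: assumes "\<sigma> \<in> I"
  shows "ind_conn Cz \<psi> (1,0) (ind_conn Cz \<psi> (0,l) (\<lambda>v. pdir \<psi> v (1,0))) (\<sigma>,\<tau>) = 0 *\<^sub>R Ps(\<sigma>,\<tau>) + (l*p*q/(x0+p*\<sigma>)) *\<^sub>R Pt(\<sigma>,\<tau>)"
proof -
  have pd: "pdir (ind_conn Cz \<psi> (0,l) (\<lambda>v. pdir \<psi> v (1,0))) (\<sigma>,\<tau>) (1,0) = vector [- (l*q*p * sin \<tau>), l*q*p * cos \<tau>, 0]"
    apply (rule pdir_s[OF I assms, where W' = "\<lambda>(\<sigma>,\<tau>). vector [- ((l*p + l*q*(x0+p*\<sigma>)) * sin \<tau>), (l*p + l*q*(x0+p*\<sigma>)) * cos \<tau>, 0]"])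
     apply (simp add: inner2_ba Ps_def Pt_def Xne' vec3_eq field_simps)
    by (auto intro!: vec3_deriv derivative_eq_intros simp: algebra_simps)
  show ?thesis unfolding ind_conn_unf[where a="(1,0)" and Y="ind_conn Cz \<psi> (0,l) (\<lambda>v. pdir \<psi> v (1,0))"]
    apply (rule tang_eq[OF assms])
    using sc[of \<tau>] Xne[OF assms] apply (simp_all only: pd inner2_ba[OF assms] D1[OF assms])
    apply (simp_all add: Cz_def Ps_def Pt_def power2_eq_square)
    apply ((simp add: algebra_simps; fail) | (insert sc[of \<tau>], algebra) | (simp add: field_simps, insert sc[of \<tau>], algebra) | (simp add: field_simps; fail))+
    done
qed

lemma sect: assumes "\<sigma> \<in> I"
  shows "sect_expr Cz \<psi> (\<sigma>,\<tau>) (1,0) (0,l) = (1/2)*(-(l*l*p*q*(x0+p*\<sigma>)) + l*l*q*q*(x0+p*\<sigma>)\<^sup>2)"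
proof -
  have c1: "ind_curv Cz \<psi> (1,0) (0,l) (0,l) (\<sigma>,\<tau>) = (-(l*l*p*q*(x0+p*\<sigma>))) *\<^sub>R Ps(\<sigma>,\<tau>)"
    unfolding ind_curv_def Let_def term1_abb[OF assms] term2_abb[OF assms]
    by (rule comb1) (simp add: algebra_simps)
  have c2: "ind_curv Cz \<psi> (0,l) (1,0) (1,0) (\<sigma>,\<tau>) = (l*q*q) *\<^sub>R Pt(\<sigma>,\<tau>)"
    unfolding ind_curv_def Let_def term1_baa[OF assms] term2_baa[OF assms]
    by (intro comb2) (simp add: algebra_simps)
  show ?thesis unfolding sect_expr_def c1 c2 D1[OF assms] D2[OF assms]
    by (simp add: dots del: vec3_scale)
qed

end


lemma affine_reduce:
  fixes I :: "real set" and x z x' z' :: "real \<Rightarrow> real"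
  assumes "open I" and "is_interval I" and "I \<noteq> {}"
    and "smooth_real_on I x" and "smooth_real_on I z"
    and dx: "\<forall>s\<in>I. (x has_real_derivative x' s) (at s)"
    and dz: "\<forall>s\<in>I. (z has_real_derivative z' s) (at s)"
    and un: "\<forall>s\<in>I. (x' s)\<^sup>2 + (z' s)\<^sup>2 = 1"
    and "\<exists>A B c. (A, B) \<noteq> (0, 0) \<and> (\<forall>s\<in>I. A * x s + B * z s = c)"
  shows "\<exists>x0 z0 p q. (\<forall>\<sigma>\<in>I. x \<sigma> = x0 + p*\<sigma>) \<and> (\<forall>\<sigma>\<in>I. z \<sigma> = z0 + q*\<sigma>) \<and> p\<^sup>2 + q\<^sup>2 = 1"
proof -
  obtain A B c where AB: "(A, B) \<noteq> (0, 0)" and lin: "\<forall>s\<in>I. A * x s + B * z s = c" using assms(9) by blast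
  have d0: "A * x' s + B * z' s = 0" if s: "s \<in> I" for s
  proof -
    have "((\<lambda>s. A * x s + B * z s) has_real_derivative A * x' s + B * z' s) (at s)"
      using dx dz s by (auto intro!: derivative_eq_intros)
    moreover have "((\<lambda>s. A * x s + B * z s) has_real_derivative 0) (at s)"
      by (rule has_field_derivative_transform_within_open[OF DERIV_const[of c "at s"] assms(1) s]) (use lin in auto)
    ultimately show ?thesis by (rule DERIV_unique)
  qed
  have cont: "continuous_on I f'" if sm: "smooth_real_on I f" and df: "\<forall>s\<in>I. (f has_real_derivative f' s) (at s)" for f f'
  proof -
    obtain D where D0: "D 0 = f" and DD: "\<forall>n. \<forall>s\<in>I. (D n has_real_derivative D (Suc n) s) (at s)"
      using sm unfolding smooth_real_on_def by blast
    have "continuous_on I (D 1)"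
      by (rule continuous_at_imp_continuous_on) (use DD DERIV_isCont in \<open>metis One_nat_def\<close>)
    moreover have "D 1 s = f' s" if "s \<in> I" for s
      using DD D0 df that DERIV_unique by (metis One_nat_def)
    ultimately show ?thesis by (rule continuous_on_eq)
  qed
  define h where "h s = B * x' s - A * z' s" for s
  define n2 where "n2 = A\<^sup>2 + B\<^sup>2"
  have n2pos: "n2 > 0" using AB unfolding n2_def by (auto simp: sum_power2_gt_zero_iff)
  have hsq: "(h s)\<^sup>2 = n2" if "s \<in> I" for s
  proof -
    have "(h s)\<^sup>2 + (A * x' s + B * z' s)\<^sup>2 = n2 * ((x' s)\<^sup>2 + (z' s)\<^sup>2)"
      unfolding h_def n2_def by algebra
    then show ?thesis using d0[OF that] un that by simp
  qed
  have cx: "continuous_on I x'" by (rule cont[OF assms(4) dx])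
  have cz: "continuous_on I z'" by (rule cont[OF assms(5) dz])
  have hc: "continuous_on I h" unfolding h_def
    by (intro continuous_intros cx cz)
  have "h constant_on I"
  proof (rule continuous_discrete_range_constant[OF is_interval_connected[OF assms(2)] hc])
    fix s assume s: "s \<in> I"
    show "\<exists>e>0. \<forall>y. y \<in> I \<and> h y \<noteq> h s \<longrightarrow> e \<le> norm (h y - h s)"
    proof (intro exI[of _ "sqrt n2"] conjI allI impI)
      show "sqrt n2 > 0" using n2pos by simp
      fix y assume y: "y \<in> I \<and> h y \<noteq> h s"
      have "(h y)\<^sup>2 = (h s)\<^sup>2" using hsq s y by simp
      then have "h y = - h s" using y by (simp add: power2_eq_iff)
      moreover have "\<bar>h s\<bar> = sqrt n2" using hsq[OF s] by (metis real_sqrt_abs)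
      ultimately show "sqrt n2 \<le> norm (h y - h s)" by simp
    qed
  qed
  then obtain h0 where h0: "\<forall>s\<in>I. h s = h0" unfolding constant_on_def by blast
  define p where "p = B * h0 / n2"
  define q where "q = - A * h0 / n2"
  have xp: "x' s = p" if "s \<in> I" for s
  proof -
    have "n2 * x' s = A * (A * x' s + B * z' s) + B * h s" unfolding n2_def h_def by algebra
    then have "n2 * x' s = B * h0" using d0[OF that] h0 that by simp
    then show ?thesis unfolding p_def using n2pos by (simp add: field_simps)
  qed
  have zq: "z' s = q" if "s \<in> I" for s
  proof -
    have "n2 * z' s = B * (A * x' s + B * z' s) - A * h s" unfolding n2_def h_def by algebra
    then have "n2 * z' s = - A * h0" using d0[OF that] h0 that by simp
    then show ?thesis unfolding q_def using n2pos by (simp add: field_simps)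
  qed
  have lx: "\<exists>c. \<forall>\<sigma>\<in>I. x \<sigma> - p * \<sigma> = c"
  proof (rule has_field_derivative_zero_constant[OF is_interval_convex[OF assms(2)]])
    fix s assume s: "s \<in> I"
    have "((\<lambda>\<sigma>. x \<sigma> - p * \<sigma>) has_real_derivative x' s - p) (at s)"
      using dx s by (auto intro!: derivative_eq_intros)
    then show "((\<lambda>\<sigma>. x \<sigma> - p * \<sigma>) has_real_derivative 0) (at s within I)"
      using xp[OF s] by (simp add: has_field_derivative_at_within)
  qed
  have lz: "\<exists>c. \<forall>\<sigma>\<in>I. z \<sigma> - q * \<sigma> = c"
  proof (rule has_field_derivative_zero_constant[OF is_interval_convex[OF assms(2)]])
    fix s assume s: "s \<in> I"
    have "((\<lambda>\<sigma>. z \<sigma> - q * \<sigma>) has_real_derivative z' s - q) (at s)"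
      using dz s by (auto intro!: derivative_eq_intros)
    then show "((\<lambda>\<sigma>. z \<sigma> - q * \<sigma>) has_real_derivative 0) (at s within I)"
      using zq[OF s] by (simp add: has_field_derivative_at_within)
  qed
  obtain x0 where "\<forall>\<sigma>\<in>I. x \<sigma> - p * \<sigma> = x0" using lx by blast
  then have "\<forall>\<sigma>\<in>I. x \<sigma> = x0 + p*\<sigma>" by (metis diff_eq_eq add.commute)
  moreover obtain z0 where "\<forall>\<sigma>\<in>I. z \<sigma> - q * \<sigma> = z0" using lz by blast
  then have "\<forall>\<sigma>\<in>I. z \<sigma> = z0 + q*\<sigma>" by (metis diff_eq_eq add.commute)
  moreover obtain s0 where "s0 \<in> I" using assms(3) by blast
  then have "p\<^sup>2 + q\<^sup>2 = 1" using un xp zq by force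
  ultimately show ?thesis by blast
qed



lemma h1: "(X::real) \<noteq> 0 \<Longrightarrow> 1/X*(1/X)*a*b*X = a*b/X" by (simp add: field_simps)
lemma h2: "(X::real) \<noteq> 0 \<Longrightarrow> 1/X*(1/X)*a*b*X\<^sup>2 = a*b" by (simp add: field_simps power2_eq_square)

theorem theorem4p3:
  fixes I :: "real set" and x z x' z' :: "real \<Rightarrow> real" and k :: real
  assumes "open I" and "is_interval I" and "I \<noteq> {}"
    and "smooth_real_on I x" and "smooth_real_on I z"
    and "\<forall>s\<in>I. (x has_real_derivative x' s) (at s)"
    and "\<forall>s\<in>I. (z has_real_derivative z' s) (at s)"
    and "\<forall>s\<in>I. x s > 0"
    and "\<forall>s\<in>I. (x' s)\<^sup>2 + (z' s)\<^sup>2 = 1"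
    and "\<exists>A B c. (A, B) \<noteq> (0, 0) \<and> (\<forall>s\<in>I. A * x s + B * z s = c)"
    and "const_sect_curv Cz (rot_surf x z) (I \<times> UNIV) k"
  shows "((\<exists>r. \<forall>s\<in>I. x s = r) \<and> k = 1/2) \<or> ((\<exists>h. \<forall>s\<in>I. z s = h) \<and> k = 0)"
proof -
  obtain x0 z0 p q where xl: "\<forall>\<sigma>\<in>I. x \<sigma> = x0 + p*\<sigma>" and zl: "\<forall>\<sigma>\<in>I. z \<sigma> = z0 + q*\<sigma>"
    and pq: "p\<^sup>2 + q\<^sup>2 = 1"
    using affine_reduce[OF assms(1-7,9,10)] by blast
  note I = assms(1) and pos = assms(8)
  have K: "k = (q\<^sup>2 - p*q/(x0 + p* s))/2" if s: "s \<in> I" for s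
  proof -
    let ?l = "1/(x0 + p* s)"
    have X: "x0 + p* s > 0" using Xpos[OF I xl zl pos pq s] .
    have e1: "pdir (rot_surf x z) (s,0) (1,0) = Ps p q (s,0)" by (rule D1[OF I xl zl pos pq s])
    have e2: "pdir (rot_surf x z) (s,0) (0,?l) = ?l *\<^sub>R Pt x0 p (s,0)" by (rule D2[OF I xl zl pos pq s])
    have n1: "norm (Ps p q (s,0)) = 1" using dots(1)[OF I xl zl pos pq, of s 0] by (simp add: norm_eq_sqrt_inner)
    have "norm (Pt x0 p (s,0)) = x0 + p* s" using dots(3)[OF I xl zl pos pq, of s 0] X by (simp add: norm_eq_sqrt_inner)
    then have n2: "norm (?l *\<^sub>R Pt x0 p (s,0)) = 1" using X by simp
    have o: "Ps p q (s,0) \<bullet> (?l *\<^sub>R Pt x0 p (s,0)) = 0" using dots(2)[OF I xl zl pos pq, of s 0] by simp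
    have "sect_expr Cz (rot_surf x z) (s,0) (1,0) (0,?l) = k"
    proof -
      have H: "\<And>a b. norm (pdir (rot_surf x z) (s,0) a) = 1 \<and> norm (pdir (rot_surf x z) (s,0) b) = 1 \<and>
                   pdir (rot_surf x z) (s,0) a \<bullet> pdir (rot_surf x z) (s,0) b = 0 \<longrightarrow> sect_expr Cz (rot_surf x z) (s,0) a b = k"
        using assms(11) s unfolding const_sect_curv_def by blast
      show ?thesis apply (rule H[THEN mp]) unfolding e1 e2 using n1 n2 o by blast
    qed
    moreover have "sect_expr Cz (rot_surf x z) (s,0) (1,0) (0,?l) = (1/2)*(-(?l*?l*p*q*(x0+p* s)) + ?l*?l*q*q*(x0+p* s)\<^sup>2)"
      by (rule sect[OF I xl zl pos pq s])
    moreover have "?l*?l*p*q*(x0+p * s) = p*q/(x0+p * s)" by (rule h1) (use X in simp)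
    moreover have "?l*?l*q*q*(x0+p * s)\<^sup>2 = q\<^sup>2" using h2[of "x0+p * s" q q] X by (simp add: power2_eq_square)
    ultimately show ?thesis by simp
  qed
  obtain s0 where s0: "s0 \<in> I" using assms(3) by blast
  obtain e where e: "e > 0" "ball s0 e \<subseteq> I" using I s0 open_contains_ball by blast
  have s1: "s0 + e/2 \<in> I" using e by (intro subsetD[OF e(2)]) (simp add: dist_real_def)
  show ?thesis
  proof (cases "p = 0")
    case True
    then have "q\<^sup>2 = 1" using pq by simp
    then have "k = 1/2" using K[OF s0] True by simp
    moreover have "\<forall>s\<in>I. x s = x0" using xl True by simp
    ultimately show ?thesis by blast
  next
    case p: False
    show ?thesis
    proof (cases "q = 0")
      case True
      then have "k = 0" using K[OF s0] by simp
      moreover have "\<forall>s\<in>I. z s = z0" using zl True by simp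
      ultimately show ?thesis by blast
    next
      case q: False
      have X0: "x0 + p* s0 > 0" and X1: "x0 + p*(s0+e/2) > 0" using Xpos[OF I xl zl pos pq] s0 s1 by auto
      have "p*q/(x0 + p* s0) = p*q/(x0 + p*(s0+e/2))" using K[OF s0] K[OF s1] by simp
      then have "x0 + p* s0 = x0 + p*(s0+e/2)" using p q X0 X1 by (simp add: field_simps)
      then have False using p e(1) by (simp add: algebra_simps)
      then show ?thesis ..
    qed
  qed
qed


end
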